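(* Let $s\geq2$. Define $f_s:\mathrm{Aut}_{s-1}(H)\to k^{\mathbb{Z}}$ by $f_s(\phi)=(\beta_n)_{n\in\mathbb{Z}}$, where $\phi(x^ny^s)=x^ny^s+\beta_n(x^{n+s}-x^n)$ for all $n\in\mathbb{Z}$. Then $f_s$ is a group epimorphism onto the additive group $k^{\mathbb{Z}}$, and $1\to\mathrm{Aut}_s(H)\hookrightarrow\mathrm{Aut}_{s-1}(H)\xrightarrow{f_s}k^{\mathbb{Z}}\to0$ is an exact sequence of groups.
   Context: Let $k$ be a field and $0\neq q\in k$ not a root of unity. $H=k_q[x,x^{-1},y]$ is the $k$-algebra generated by $x,x^{-1},y$ with $xx^{-1}=x^{-1}x=1$, $yx=qxy$, a Hopf algebra with $\Delta(x)=x\otimes x$, $\Delta(y)=y\otimes x+1\otimes y$, $\varepsilon(x)=1$, $\varepsilon(y)=0$; $\{x^ny^m:n\in\mathbb{Z},m\in\mathbb{N}\}$ is a $k$-basis. Let $H_0=\mathrm{span}\{x^n\}$, $H(m)=H_0y^m$. $\mathrm{Aut}_c(H)$ is the group under composition of coalgebra automorphisms of $H$, and for $m\geq1$, $\mathrm{Aut}_m(H)=\{\phi\in\mathrm{Aut}_c(H):\phi(h)=h\text{ for all }h\in\sum_{i=0}^mH(i)\}$. $k^{\mathbb{Z}}$ is the group of sequences in $k$ under componentwise addition. It is a fact (proved in the paper) that for every $\phi\in\mathrm{Aut}_{s-1}(H)$ there is a unique $(\beta_n)_{n\in\mathbb{Z}}\in k^{\mathbb{Z}}$ with $\phi(x^ny^s)=x^ny^s+\beta_n(x^{n+s}-x^n)$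 for all $n$, so $f_s$ is well defined. *)

theory Defs
  imports "HOL-Library.Poly_Mapping" "HOL-Algebra.Algebra"
begin

text \<open>The quantum plane Hopf algebra H = k_q[x,x^{-1},y], represented as finitely
supported functions on its basis: the pair (n,m) stands for x^n y^m.\<close>

type_synonym 'k hopfH = "(int \<times> nat) \<Rightarrow>\<^sub>0 'k"
type_synonym 'k hopfHH = "((int \<times> nat) \<times> (int \<times> nat)) \<Rightarrow>\<^sub>0 'k"

definition mon :: "int \<Rightarrow> nat \<Rightarrow> 'k::field hopfH" where
  "mon n m = Poly_Mapping.single (n, m) 1"

definition smul :: "'k::field \<Rightarrow> ('a \<Rightarrow>\<^sub>0 'k) \<Rightarrow> ('a \<Rightarrow>\<^sub>0 'k)" where
  "smul c v = (\<Sum>p\<in>Poly_Mapping.keys v. Poly_Mapping.single p (c * Poly_Mapping.lookup v p))"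

definition k_linear :: "(('a \<Rightarrow>\<^sub>0 'k::field) \<Rightarrow> ('b \<Rightarrow>\<^sub>0 'k)) \<Rightarrow> bool" where
  "k_linear f \<longleftrightarrow> (\<forall>u v. f (u + v) = f u + f v) \<and> (\<forall>c v. f (smul c v) = smul c (f v))"

definition tens :: "'k::field hopfH \<Rightarrow> 'k hopfH \<Rightarrow> 'k hopfHH" where
  "tens a b = (\<Sum>p\<in>Poly_Mapping.keys a. \<Sum>r\<in>Poly_Mapping.keys b. Poly_Mapping.single (p, r) (Poly_Mapping.lookup a p * Poly_Mapping.lookup b r))"

text \<open>Product of basis elements in H: (x^a y^b)(x^c y^d) = q^(bc) x^(a+c) y^(b+d),
  since y x = q x y.\<close>
definition bcoef :: "'k::field \<Rightarrow> int \<times> nat \<Rightarrow> int \<times> nat \<Rightarrow> 'k" where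
  "bcoef q p r = q powi (int (snd p) * fst r)"

definition bprod :: "int \<times> nat \<Rightarrow> int \<times> nat \<Rightarrow> int \<times> nat" where
  "bprod p r = (fst p + fst r, snd p + snd r)"

definition tmul :: "'k::field \<Rightarrow> 'k hopfHH \<Rightarrow> 'k hopfHH \<Rightarrow> 'k hopfHH" where
  "tmul q t u = (\<Sum>p\<in>Poly_Mapping.keys t. \<Sum>r\<in>Poly_Mapping.keys u.
     Poly_Mapping.single (bprod (fst p) (fst r), bprod (snd p) (snd r))
       (Poly_Mapping.lookup t p * Poly_Mapping.lookup u r * bcoef q (fst p) (fst r) * bcoef q (snd p) (snd r)))"

primrec tpow :: "'k::field \<Rightarrow> 'k hopfHH \<Rightarrow> nat \<Rightarrow> 'k hopfHH" where
  "tpow q t 0 = Poly_Mapping.single ((0, 0), (0, 0)) 1"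
| "tpow q t (Suc m) = tmul q (tpow q t m) t"

text \<open>\<Delta>(y) = y \<otimes> x + 1 \<otimes> y\<close>
definition comul_y :: "'k::field hopfHH" where
  "comul_y = Poly_Mapping.single ((0, 1), (1, 0)) 1 + Poly_Mapping.single ((0, 0), (0, 1)) 1"

text \<open>\<Delta>(x^n y^m) = \<Delta>(x)^n \<Delta>(y)^m, with \<Delta>(x)^n = x^n \<otimes> x^n (\<Delta> is an algebra map)\<close>
definition comul_basis :: "'k::field \<Rightarrow> int \<times> nat \<Rightarrow> 'k hopfHH" where
  "comul_basis q p = tmul q (Poly_Mapping.single ((fst p, 0), (fst p, 0)) 1) (tpow q comul_y (snd p))"

definition comul :: "'k::field \<Rightarrow> 'k hopfH \<Rightarrow> 'k hopfHH" where
  "comul q v = (\<Sum>p\<in>Poly_Mapping.keys v. smul (Poly_Mapping.lookup v p) (comul_basis q p))"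

definition counit :: "'k::field hopfH \<Rightarrow> 'k" where
  "counit v = (\<Sum>p\<in>Poly_Mapping.keys v. if snd p = 0 then Poly_Mapping.lookup v p else 0)"

definition tensor_map :: "('k::field hopfH \<Rightarrow> 'k hopfH) \<Rightarrow> ('k hopfH \<Rightarrow> 'k hopfH) \<Rightarrow> 'k hopfHH \<Rightarrow> 'k hopfHH" where
  "tensor_map f g t = (\<Sum>pr\<in>Poly_Mapping.keys t. smul (Poly_Mapping.lookup t pr)
      (tens (f (Poly_Mapping.single (fst pr) 1)) (g (Poly_Mapping.single (snd pr) 1))))"

definition Aut_c :: "'k::field \<Rightarrow> ('k hopfH \<Rightarrow> 'k hopfH) set" where
  "Aut_c q = {\<phi>. k_linear \<phi> \<and> bij \<phi> \<and>
      (\<forall>v. comul q (\<phi> v) = tensor_map \<phi> \<phi> (comul q v)) \<and>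
      (\<forall>v. counit (\<phi> v) = counit v)}"

definition AutG :: "'k::field \<Rightarrow> ('k hopfH \<Rightarrow> 'k hopfH) monoid" where
  "AutG q = \<lparr>carrier = Aut_c q, monoid.mult = (\<circ>), one = id\<rparr>"

definition Hle :: "nat \<Rightarrow> 'k::field hopfH set" where
  "Hle m = {h. \<forall>p\<in>Poly_Mapping.keys h. snd p \<le> m}"

definition Aut_m :: "'k::field \<Rightarrow> nat \<Rightarrow> ('k hopfH \<Rightarrow> 'k hopfH) set" where
  "Aut_m q m = {\<phi>\<in>Aut_c q. \<forall>h\<in>Hle m. \<phi> h = h}"

definition seqG :: "(int \<Rightarrow> 'k::field) monoid" where
  "seqG = \<lparr>carrier = UNIV, monoid.mult = (\<lambda>a b n. a n + b n), one = (\<lambda>n. 0)\<rparr>"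

definition f_s :: "nat \<Rightarrow> ('k::field hopfH \<Rightarrow> 'k hopfH) \<Rightarrow> (int \<Rightarrow> 'k)" where
  "f_s s \<phi> = (\<lambda>n. THE \<beta>. \<phi> (mon n s) = mon n s + smul \<beta> (mon (n + int s) 0 - mon n 0))"

end

theory Submission
  imports Defs
begin

abbreviation kys where "kys \<equiv> Poly_Mapping.keys"
abbreviation lkp where "lkp \<equiv> Poly_Mapping.lookup"
abbreviation sgl where "sgl \<equiv> Poly_Mapping.single"

lemma lookup_smul[simp]: "lkp (smul c v) x = c * lkp v x"
proof -
  have "lkp (smul c v) x = (\<Sum>p\<in>kys v. if p = x then c * lkp v p else 0)"
    unfolding smul_def lookup_sum lookup_single when_def by (intro sum.cong) auto
  also have "\<dots> = c * lkp v x"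
    by (cases "x \<in> kys v") (auto simp: in_keys_iff)
  finally show ?thesis .
qed

lemma smul_eq_iff: "smul c v = w \<longleftrightarrow> (\<forall>x. c * lkp v x = lkp w x)"
  by (metis lookup_smul poly_mapping_eqI)

lemma sum_keys_ext:
  assumes "finite A" "kys v \<subseteq> A"
  shows "(\<Sum>p\<in>kys v. lkp v p * (g p::'k::field)) = (\<Sum>p\<in>A. lkp v p * g p)"
  by (rule sum.mono_neutral_left) (use assms in \<open>auto simp: in_keys_iff\<close>)

definition lext :: "('a \<Rightarrow> ('b \<Rightarrow>\<^sub>0 'k::field)) \<Rightarrow> ('a \<Rightarrow>\<^sub>0 'k) \<Rightarrow> ('b \<Rightarrow>\<^sub>0 'k)" where
  "lext B v = (\<Sum>p\<in>kys v. smul (lkp v p) (B p))"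

lemma lookup_lext: "lkp (lext B v) x = (\<Sum>p\<in>kys v. lkp v p * lkp (B p) x)"
  unfolding lext_def lookup_sum by simp

lemma lookup_lext_ext: "finite A \<Longrightarrow> kys v \<subseteq> A \<Longrightarrow>
   lkp (lext B v) x = (\<Sum>p\<in>A. lkp v p * lkp (B p) x)"
  unfolding lookup_lext by (rule sum_keys_ext)

lemma lext_add: "lext B (u + v) = lext B u + lext B v"
proof (rule poly_mapping_eqI)
  fix x
  let ?A = "kys u \<union> kys v"
  have "kys (u+v) \<subseteq> ?A" by (rule keys_add)
  then show "lkp (lext B (u + v)) x = lkp (lext B u + lext B v) x"
    unfolding lookup_add
    by (subst (1 2 3) lookup_lext_ext[of ?A]) (auto simp: lookup_add distrib_right sum.distrib)
qed

lemma lext_smul: "lext B (smul c v) = smul c (lext B v)"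
proof (rule poly_mapping_eqI)
  fix x
  have k: "kys (smul c v) \<subseteq> kys v" by (auto simp: in_keys_iff)
  show "lkp (lext B (smul c v)) x = lkp (smul c (lext B v)) x"
    using lookup_lext_ext[OF finite_keys k, of B x] by (simp add: lookup_lext sum_distrib_left mult.assoc)
qed

lemma lext_single: "lext B (sgl p c) = smul c (B p)"
  by (rule poly_mapping_eqI) (simp add: lookup_lext_ext[of "{p}"] lookup_single)

lemma lext_zero[simp]: "lext B 0 = 0"
  by (simp add: lext_def)

lemma lext_sum: "lext B (sum g A) = (\<Sum>a\<in>A. lext B (g a))"
  by (induction A rule: infinite_finite_induct) (auto simp: lext_add)

lemma k_linear_lext: "k_linear (lext B)"
  unfolding k_linear_def by (simp add: lext_add lext_smul)

lemma poly_mapping_sum_singles: "v = (\<Sum>p\<in>kys v. sgl p (lkp v p))"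
  by (rule poly_mapping_eqI) (simp add: lookup_sum lookup_single when_def
      sum.delta'[where S="kys v"] in_keys_iff cong: if_cong)

lemma single_smul: "sgl p c = smul c (sgl p (1::'k::field))"
  by (rule poly_mapping_eqI) (simp add: lookup_single when_def)

lemma linear_zero: "k_linear f \<Longrightarrow> f 0 = 0"
  unfolding k_linear_def by (metis add_cancel_right_right add_0)

lemma linear_sum: "k_linear f \<Longrightarrow> f (sum g A) = (\<Sum>a\<in>A. f (g a))"
  by (induction A rule: infinite_finite_induct) (auto simp: linear_zero k_linear_def)

lemma linear_is_lext: assumes "k_linear f" shows "f = lext (\<lambda>p. f (sgl p 1))"
proof
  fix v
  have "f v = f (\<Sum>p\<in>kys v. smul (lkp v p) (sgl p 1))"
    by (subst poly_mapping_sum_singles) (simp add: single_smul[symmetric])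
  also have "\<dots> = lext (\<lambda>p. f (sgl p 1)) v"
    using assms by (simp add: linear_sum lext_def k_linear_def)
  finally show "f v = lext (\<lambda>p. f (sgl p 1)) v" .
qed

lemma lookup_tens: "lkp (tens a b) (p, r) = lkp a p * lkp b r"
proof -
  have "lkp (tens a b) (p, r) = (\<Sum>p'\<in>kys a. \<Sum>r'\<in>kys b. if p' = p \<and> r' = r then lkp a p' * lkp b r' else 0)"
    unfolding tens_def lookup_sum lookup_single when_def by (intro sum.cong) auto
  also have "\<dots> = (\<Sum>p'\<in>kys a. if p' = p then lkp a p' * lkp b r else 0)"
    by (intro sum.cong refl) (cases "r \<in> kys b", auto simp: in_keys_iff if_distrib cong: if_cong)
  also have "\<dots> = lkp a p * lkp b r"
    by (cases "p \<in> kys a") (auto simp: in_keys_iff)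
  finally show ?thesis .
qed

lemma comul_lext: "comul q = lext (comul_basis q)"
  by (intro ext) (simp only: comul_def lext_def)

lemma tensor_map_lext: "tensor_map f g = lext (\<lambda>pr. tens (f (sgl (fst pr) 1)) (g (sgl (snd pr) 1)))"
  by (intro ext) (simp only: tensor_map_def lext_def)

lemma tens_eq_iff: "(\<forall>p r. lkp a p * lkp b r = lkp t (p, r)) \<Longrightarrow> tens a b = t"
  by (rule poly_mapping_eqI) (auto simp: lookup_tens)



lemma tmul_ext:
  assumes "finite A" "kys t \<subseteq> A" "finite B" "kys u \<subseteq> B"
  shows "tmul q t u = (\<Sum>p\<in>A. \<Sum>r\<in>B.
     sgl (bprod (fst p) (fst r), bprod (snd p) (snd r))
       (lkp t p * lkp u r * bcoef q (fst p) (fst r) * bcoef q (snd p) (snd r)))"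
proof -
  have "tmul q t u = (\<Sum>p\<in>A. \<Sum>r\<in>kys u.
     sgl (bprod (fst p) (fst r), bprod (snd p) (snd r))
       (lkp t p * lkp u r * bcoef q (fst p) (fst r) * bcoef q (snd p) (snd r)))"
    unfolding tmul_def by (rule sum.mono_neutral_left) (use assms in \<open>auto simp: in_keys_iff\<close>)
  show ?thesis unfolding \<open>tmul q t u = _\<close>
    by (intro sum.cong refl sum.mono_neutral_left) (use assms in \<open>auto simp: in_keys_iff\<close>)
qed



lemma tmul_add_left: "tmul q (t1 + t2) u = tmul q t1 u + tmul q t2 u"
proof -
  let ?A = "kys t1 \<union> kys t2"
  have "kys (t1 + t2) \<subseteq> ?A" by (rule keys_add)
  then show ?thesis
    by (subst (1 2 3) tmul_ext[where A="?A" and B="kys u"])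
       (auto simp: lookup_add distrib_right single_add sum.distrib)
qed

lemma tmul_add_right: "tmul q t (u1 + u2) = tmul q t u1 + tmul q t u2"
proof -
  let ?B = "kys u1 \<union> kys u2"
  have "kys (u1 + u2) \<subseteq> ?B" by (rule keys_add)
  then show ?thesis
    by (subst (1 2 3) tmul_ext[where A="kys t" and B="?B"])
       (auto simp: lookup_add distrib_left distrib_right single_add sum.distrib)
qed

lemma tmul_zero_left[simp]: "tmul q 0 u = 0" by (simp add: tmul_def)
lemma tmul_zero_right[simp]: "tmul q t 0 = 0" by (simp add: tmul_def)

lemma tmul_sum_left: "tmul q (sum f I) u = (\<Sum>i\<in>I. tmul q (f i) u)"
  by (induction I rule: infinite_finite_induct) (auto simp: tmul_add_left)

lemma tmul_sum_right: "tmul q t (sum f I) = (\<Sum>i\<in>I. tmul q t (f i))"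
  by (induction I rule: infinite_finite_induct) (auto simp: tmul_add_right)

lemma tmul_single: "tmul q (sgl p a) (sgl r b) =
   sgl (bprod (fst p) (fst r), bprod (snd p) (snd r)) (a * b * bcoef q (fst p) (fst r) * bcoef q (snd p) (snd r))"
  by (subst tmul_ext[where A="{p}" and B="{r}"]) auto

fun cb :: "'k::field \<Rightarrow> nat \<Rightarrow> nat \<Rightarrow> 'k" where
  "cb q 0 i = (if i = 0 then 1 else 0)"
| "cb q (Suc m) i = cb q m i + (if i = 0 then 0 else q^(m+1-i) * cb q m (i-1))"

lemma cb_gt: "i > m \<Longrightarrow> cb q m i = 0"
  by (induction m arbitrary: i) auto

lemma cb_0[simp]: "cb q m 0 = 1"
  by (induction m) auto

lemma cb_m[simp]: "cb q m m = 1"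
  by (induction m) (auto simp: cb_gt)

lemma nat_int_diff: "nat (int m - int i) = m - i" by simp

lemma tpow_formula: "tpow q comul_y m = (\<Sum>i\<le>m. sgl ((0, i), (int i, m - i)) (cb q m i))"
proof (induction m)
  case 0
  then show ?case by simp
next
  case (Suc m)
  have "tpow q comul_y (Suc m) = tmul q (\<Sum>i\<le>m. sgl ((0, i), (int i, m - i)) (cb q m i)) comul_y"
    using Suc by simp
  also have "\<dots> = (\<Sum>i\<le>m. sgl ((0, Suc i), (int (Suc i), m - i)) (cb q m i * q^(m-i)))
      + (\<Sum>i\<le>m. sgl ((0, i), (int i, Suc m - i)) (cb q m i))"
    unfolding comul_y_def tmul_add_right tmul_sum_left tmul_single
    apply (simp add: bprod_def bcoef_def sum.distrib Suc_diff_le add.commute power_int_def)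
    apply (simp add: nat_int_diff)
    done
  also have "\<dots> = (\<Sum>i\<le>Suc m. sgl ((0, i), (int i, Suc m - i)) (cb q (Suc m) i))"
  proof -
    have "(\<Sum>i\<le>Suc m. sgl ((0, i), (int i, Suc m - i)) (cb q (Suc m) i)) =
       (\<Sum>i\<le>Suc m. sgl ((0, i), (int i, Suc m - i)) (cb q m i)) +
       (\<Sum>i\<le>Suc m. sgl ((0, i), (int i, Suc m - i)) (if i = 0 then 0 else q^(m+1-i) * cb q m (i-1)))"
      by (simp add: single_add sum.distrib)
    also have "(\<Sum>i\<le>Suc m. sgl ((0, i), (int i, Suc m - i)) (cb q m i)) =
       (\<Sum>i\<le>m. sgl ((0, i), (int i, Suc m - i)) (cb q m i))"
      by (simp add: cb_gt)
    also have "(\<Sum>i\<le>Suc m. sgl ((0, i), (int i, Suc m - i)) (if i = 0 then 0 else q^(m+1-i) * cb q m (i-1)))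
        = (\<Sum>i\<le>m. sgl ((0, Suc i), (int (Suc i), m - i)) (cb q m i * q^(m-i)))"
      by (subst sum.atMost_Suc_shift) (simp add: mult.commute)
    finally show ?thesis by - (rule trans[OF add.commute], erule sym)
  qed
  finally show ?case .
qed

lemma comul_basis_formula:
  "comul_basis q (n, m) = (\<Sum>i\<le>m. sgl ((n, i), (n + int i, m - i)) (cb q m i))"
  unfolding comul_basis_def tpow_formula tmul_sum_right tmul_single
  by (simp add: bprod_def bcoef_def)

lemma lookup_comul_basis:
  "lkp (comul_basis q (n, m)) ((a, i), (b, j)) =
     (if a = n \<and> b = n + int i \<and> i + j = m then cb q m i else 0)"
proof -
  have "lkp (comul_basis q (n, m)) ((a, i), (b, j)) =
     (\<Sum>i'\<le>m. if i' = i then (if a = n \<and> b = n + int i \<and> i + j = m then cb q m i else 0) else 0)"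
    unfolding comul_basis_formula lookup_sum lookup_single when_def
    by (intro sum.cong refl) auto
  also have "\<dots> = (if a = n \<and> b = n + int i \<and> i + j = m then cb q m i else 0)"
    by (auto simp: sum.delta)
  finally show ?thesis .
qed

lemma lookup_comul:
  "lkp (comul q d) ((a, i), (b, j)) = (if b = a + int i then lkp d (a, i + j) * cb q (i + j) i else 0)"
proof -
  have "lkp (comul q d) ((a, i), (b, j)) =
    (\<Sum>p\<in>kys d. if p = (a, i+j) then (if b = a + int i then lkp d (a, i + j) * cb q (i + j) i else 0) else 0)"
    unfolding comul_lext lookup_lext
    by (intro sum.cong refl) (auto simp: lookup_comul_basis split: prod.splits if_splits)
  also have "\<dots> = (if b = a + int i then lkp d (a, i + j) * cb q (i + j) i else 0)"
    by (cases "(a, i+j) \<in> kys d") (auto simp: in_keys_iff)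
  finally show ?thesis .
qed


lemma lookup_tensor_map: "lkp (tensor_map f g t) (k1, k2) =
  (\<Sum>pr\<in>kys t. lkp t pr * (lkp (f (sgl (fst pr) 1)) k1 * lkp (g (sgl (snd pr) 1)) k2))"
  unfolding tensor_map_lext lookup_lext by (simp add: lookup_tens)

lemma lookup_tensor_map_ext: "finite A \<Longrightarrow> kys t \<subseteq> A \<Longrightarrow> lkp (tensor_map f g t) (k1, k2) =
  (\<Sum>pr\<in>A. lkp t pr * (lkp (f (sgl (fst pr) 1)) k1 * lkp (g (sgl (snd pr) 1)) k2))"
  unfolding lookup_tensor_map by (rule sum_keys_ext)

lemma lookup_linear: "k_linear f \<Longrightarrow> lkp (f u) k = (\<Sum>p\<in>kys u. lkp u p * lkp (f (sgl p 1)) k)"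
  by (subst linear_is_lext) (auto simp: lookup_lext)

lemma lookup_tens': "lkp (tens a b) pr = lkp a (fst pr) * lkp b (snd pr)"
  by (metis lookup_tens prod.collapse)

lemma tensor_map_tens:
  assumes f: "k_linear f" and g: "k_linear g"
  shows "tensor_map f g (tens u v) = tens (f u) (g v)"
proof (rule poly_mapping_eqI, clarify)
  fix k1 k2
  have sub: "kys (tens u v) \<subseteq> kys u \<times> kys v"
    by (auto simp: in_keys_iff lookup_tens)
  have "lkp (tensor_map f g (tens u v)) (k1, k2) =
     (\<Sum>pr\<in>kys u \<times> kys v. lkp (tens u v) pr * (lkp (f (sgl (fst pr) 1)) k1 * lkp (g (sgl (snd pr) 1)) k2))"
    by (rule lookup_tensor_map_ext[OF _ sub]) simp
  also have "\<dots> = (\<Sum>pr\<in>kys u \<times> kys v. (lkp u (fst pr) * lkp (f (sgl (fst pr) 1)) k1) * (lkp v (snd pr) * lkp (g (sgl (snd pr) 1)) k2))"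
    by (rule sum.cong[OF refl]) (simp add: lookup_tens')
  also have "\<dots> = (\<Sum>p\<in>kys u. \<Sum>r\<in>kys v. (lkp u p * lkp (f (sgl p 1)) k1) * (lkp v r * lkp (g (sgl r 1)) k2))"
    by (simp only: sum.cartesian_product' fst_conv snd_conv)
  also have "\<dots> = lkp (f u) k1 * lkp (g v) k2"
    unfolding lookup_linear[OF f, of u k1] lookup_linear[OF g, of v k2] by (simp only: sum_product)
  finally show "lkp (tensor_map f g (tens u v)) (k1, k2) = lkp (tens (f u) (g v)) (k1, k2)"
    by (simp add: lookup_tens)
qed

lemma linear_lext_comp: "k_linear h \<Longrightarrow> h (lext B t) = lext (h \<circ> B) t"
  unfolding lext_def by (simp add: linear_sum k_linear_def)

lemma tensor_map_comp:
  assumes f: "k_linear f" and g: "k_linear g"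
  shows "tensor_map f f (tensor_map g g t) = tensor_map (f \<circ> g) (f \<circ> g) t"
proof -
  have lin: "k_linear (tensor_map f f)" by (simp add: tensor_map_lext k_linear_lext)
  show ?thesis
    apply (subst (2) tensor_map_lext)
    apply (subst linear_lext_comp[OF lin])
    apply (subst (2) tensor_map_lext)
    apply (simp add: o_def tensor_map_tens[OF f f])
    done
qed

lemma tensor_map_id: "tensor_map id id t = t"
proof -
  have "tensor_map id id t = lext (\<lambda>pr. sgl pr 1) t"
    unfolding tensor_map_lext
    by (rule arg_cong[where f="\<lambda>B. lext B t"]) (auto intro!: poly_mapping_eqI tens_eq_iff simp: lookup_single when_def)
  also have "\<dots> = t"
  proof (rule poly_mapping_eqI)
    fix k
    have "lkp (lext (\<lambda>pr. sgl pr 1) t) k = (\<Sum>p\<in>kys t. if p = k then lkp t p else 0)"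
      by (simp add: lookup_lext lookup_single when_def if_distrib cong: if_cong)
    also have "\<dots> = lkp t k" by (cases "k \<in> kys t") (auto simp: in_keys_iff)
    finally show "lkp (lext (\<lambda>pr. sgl pr 1) t) k = lkp t k" .
  qed
  finally show ?thesis .
qed

lemma linear_comp: "k_linear f \<Longrightarrow> k_linear g \<Longrightarrow> k_linear (f \<circ> g)"
  by (simp add: k_linear_def)

lemma linear_inv: assumes "k_linear f" "bij f" shows "k_linear (inv_into UNIV f)"
proof -
  have fi: "f (inv_into UNIV f x) = x" for x using assms(2) by (simp add: bij_def surj_f_inv_f)
  have i: "inv_into UNIV f (f x) = x" for x using assms(2) by (simp add: bij_def)
  have a: "f (u + v) = f u + f v" "f (smul c v) = smul c (f v)" for u v c
    using assms(1) by (auto simp: k_linear_def)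
  show ?thesis unfolding k_linear_def
  proof safe
    fix u v
    have "inv_into UNIV f (u + v) = inv_into UNIV f (f (inv_into UNIV f u) + f (inv_into UNIV f v))" by (simp only: fi)
    also have "\<dots> = inv_into UNIV f u + inv_into UNIV f v" by (simp only: a(1)[symmetric] i)
    finally show "inv_into UNIV f (u + v) = inv_into UNIV f u + inv_into UNIV f v" .
  next
    fix c v
    have "inv_into UNIV f (smul c v) = inv_into UNIV f (smul c (f (inv_into UNIV f v)))" by (simp only: fi)
    also have "\<dots> = smul c (inv_into UNIV f v)" by (simp only: a(2)[symmetric] i)
    finally show "inv_into UNIV f (smul c v) = smul c (inv_into UNIV f v)" .
  qed
qed

lemma Aut_c_comp: "\<phi> \<in> Aut_c q \<Longrightarrow> \<psi> \<in> Aut_c q \<Longrightarrow> \<phi> \<circ> \<psi> \<in> Aut_c q"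
  unfolding Aut_c_def by (auto simp: linear_comp bij_comp tensor_map_comp)

lemma Aut_c_id: "id \<in> Aut_c q"
  unfolding Aut_c_def by (auto simp: k_linear_def tensor_map_id)

lemma Aut_c_inv: assumes "\<phi> \<in> Aut_c q" shows "inv_into UNIV \<phi> \<in> Aut_c q"
proof -
  have lin: "k_linear \<phi>" and b: "bij \<phi>" and c: "\<And>v. comul q (\<phi> v) = tensor_map \<phi> \<phi> (comul q v)"
    and e: "\<And>v. counit (\<phi> v) = counit v" using assms by (auto simp: Aut_c_def)
  have fi: "\<phi> (inv_into UNIV \<phi> x) = x" for x using b by (simp add: bij_def surj_f_inv_f)
  have io: "inv_into UNIV \<phi> \<circ> \<phi> = id" using b by (simp add: bij_def)
  have li: "k_linear (inv_into UNIV \<phi>)" by (rule linear_inv[OF lin b])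
  have "comul q (inv_into UNIV \<phi> v) = tensor_map (inv_into UNIV \<phi>) (inv_into UNIV \<phi>) (comul q v)" for v
  proof -
    have "tensor_map (inv_into UNIV \<phi>) (inv_into UNIV \<phi>) (comul q v) = tensor_map (inv_into UNIV \<phi>) (inv_into UNIV \<phi>) (comul q (\<phi> (inv_into UNIV \<phi> v)))"
      by (simp add: fi)
    also have "\<dots> = comul q (inv_into UNIV \<phi> v)"
      by (simp add: c tensor_map_comp[OF li lin] io tensor_map_id)
    finally show ?thesis by simp
  qed
  moreover have "counit (inv_into UNIV \<phi> v) = counit v" for v by (metis e fi)
  ultimately show ?thesis using li b by (simp add: Aut_c_def bij_imp_bij_inv)
qed

lemma Aut_m_sub: "Aut_m q m \<subseteq> Aut_c q" by (auto simp: Aut_m_def)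

lemma Aut_m_comp: "\<phi> \<in> Aut_m q m \<Longrightarrow> \<psi> \<in> Aut_m q m \<Longrightarrow> \<phi> \<circ> \<psi> \<in> Aut_m q m"
  unfolding Aut_m_def by (auto simp: Aut_c_comp)

lemma Aut_m_inv: assumes "\<phi> \<in> Aut_m q m" shows "inv_into UNIV \<phi> \<in> Aut_m q m"
proof -
  have b: "bij \<phi>" using assms by (auto simp: Aut_m_def Aut_c_def)
  have "inv_into UNIV \<phi> h = h" if "h \<in> Hle m" for h
    using assms that b by (auto simp: Aut_m_def bij_def) (metis inv_f_f)
  then show ?thesis using assms Aut_c_inv by (auto simp: Aut_m_def)
qed

lemma Aut_m_id: "id \<in> Aut_m q m" by (simp add: Aut_m_def Aut_c_id)

lemma Aut_m_group: "group ((AutG q)\<lparr>carrier := Aut_m q m\<rparr>)"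
proof (rule groupI)
  fix x assume x: "x \<in> carrier ((AutG q)\<lparr>carrier := Aut_m q m\<rparr>)"
  then have "inv_into UNIV x \<in> Aut_m q m" "inv_into UNIV x \<circ> x = id"
    using Aut_m_inv[of x] by (auto simp: Aut_m_def Aut_c_def bij_def)
  then show "\<exists>y\<in>carrier ((AutG q)\<lparr>carrier := Aut_m q m\<rparr>).
            y \<otimes>\<^bsub>(AutG q)\<lparr>carrier := Aut_m q m\<rparr>\<^esub> x = \<one>\<^bsub>(AutG q)\<lparr>carrier := Aut_m q m\<rparr>\<^esub>"
    by (auto simp: AutG_def)
qed (auto simp: AutG_def Aut_m_comp Aut_m_id o_assoc)

lemma seqG_group: "group (seqG :: (int \<Rightarrow> 'k::field) monoid)"
proof (rule groupI)
  fix x :: "int \<Rightarrow> 'k" 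
  show "\<exists>y\<in>carrier seqG. y \<otimes>\<^bsub>seqG\<^esub> x = \<one>\<^bsub>seqG\<^esub>"
    by (rule bexI[of _ "\<lambda>n. - x n"]) (auto simp: seqG_def)
qed (auto simp: seqG_def add.assoc)


lemma mon_single: "mon n m = sgl (n, m) 1" by (simp add: mon_def)

lemma lookup_mon: "lkp (mon n m) (a, i) = (if a = n \<and> i = m then 1 else 0)"
  by (auto simp: mon_def lookup_single when_def)

lemma mon_Hle: "i \<le> m \<Longrightarrow> mon n i \<in> Hle m"
  by (simp add: Hle_def mon_def)

lemma Aut_m_fix: "\<phi> \<in> Aut_m q m \<Longrightarrow> h \<in> Hle m \<Longrightarrow> \<phi> h = h"
  by (simp add: Aut_m_def)

lemma Aut_m_fix_mon: "\<phi> \<in> Aut_m q m \<Longrightarrow> i \<le> m \<Longrightarrow> \<phi> (mon n i) = mon n i"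
  by (simp add: Aut_m_def mon_Hle)

lemma Aut_m_linear: "\<phi> \<in> Aut_m q m \<Longrightarrow> k_linear \<phi>"
  by (simp add: Aut_m_def Aut_c_def)

lemma Aut_m_coalg: "\<phi> \<in> Aut_m q m \<Longrightarrow> comul q (\<phi> v) = tensor_map \<phi> \<phi> (comul q v)"
  by (simp add: Aut_m_def Aut_c_def)

lemma comul_mon: "comul q (mon n m) = (\<Sum>i\<le>m. sgl ((n, i), (n + int i, m - i)) (cb q m i))"
proof -
  have "comul q (mon n m) = smul 1 (comul_basis q (n, m))"
    by (simp add: comul_lext mon_single lext_single)
  also have "smul 1 x = x" for x :: "'k::field hopfHH" by (rule poly_mapping_eqI) simp
  finally show ?thesis by (simp add: comul_basis_formula)
qed

lemma lookup_tm_comul_mon: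
  "lkp (tensor_map \<phi> \<phi> (comul q (mon n s))) (k1, k2) =
    (\<Sum>i\<le>s. cb q s i * (lkp (\<phi> (mon n i)) k1 * lkp (\<phi> (mon (n + int i) (s - i))) k2))"
  unfolding comul_mon tensor_map_lext lext_sum lext_single lookup_sum
  by (simp add: lookup_tens mon_single)

lemma sum_split_ends:
  assumes "1 \<le> (s::nat)"
  shows "sum f {..s} = f 0 + f s + sum f {1..<s}"
proof -
  have "{..s} = insert 0 (insert s {1..<s})" using assms by auto
  then show ?thesis using assms by (simp add: add.assoc)
qed

lemma cb_1: "(1 - q) * cb q m 1 = 1 - q ^ m"
proof (induction m)
  case (Suc m)
  have "(1 - q) * cb q (Suc m) 1 = (1 - q) * cb q m 1 + (1 - q) * q ^ m" by (simp add: algebra_simps)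
  also have "\<dots> = 1 - q ^ m + (1 - q) * q ^ m" using Suc.IH by simp
  also have "\<dots> = 1 - q ^ Suc m" by (simp add: algebra_simps)
  finally show ?case .
qed simp

lemma cb_1_nz:
  assumes "\<forall>n::nat. n > 0 \<longrightarrow> q ^ n \<noteq> 1" "m > 0"
  shows "cb q m 1 \<noteq> 0"
  using cb_1[of q m] assms by auto

lemma skew_eq:
  fixes n :: int
  assumes phi: "\<phi> \<in> Aut_m q (s - 1)" and s: "s \<ge> 2"
  defines "e \<equiv> lkp (\<phi> (mon n s))"
  shows "(if b = a + int i then e (a, i + j) * cb q (i + j) i else 0) =
     (if a = n \<and> i = 0 then e (b, j) else 0) + (if b = n + int s \<and> j = 0 then e (a, i) else 0)
     + (if 0 < i \<and> i < s \<and> a = n \<and> b = n + int i \<and> j = s - i then cb q s i else 0)"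
proof -
  have "(if b = a + int i then e (a, i + j) * cb q (i + j) i else 0) =
     lkp (comul q (\<phi> (mon n s))) ((a, i), (b, j))"
    by (simp add: lookup_comul e_def)
  also have "\<dots> = lkp (tensor_map \<phi> \<phi> (comul q (mon n s))) ((a, i), (b, j))"
    by (simp add: Aut_m_coalg[OF phi])
  also have "\<dots> = (\<Sum>i'\<le>s. cb q s i' * (lkp (\<phi> (mon n i')) (a, i) * lkp (\<phi> (mon (n + int i') (s - i'))) (b, j)))"
    by (rule lookup_tm_comul_mon)
  also have "\<dots> = (if a = n \<and> i = 0 then e (b, j) else 0) + (if b = n + int s \<and> j = 0 then e (a, i) else 0)
     + (\<Sum>i'\<in>{1..<s}. if i' = i then (if a = n \<and> b = n + int i \<and> j = s - i then cb q s i else 0) else 0)"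
  proof -
    have f0: "\<phi> (mon n 0) = mon n 0" by (rule Aut_m_fix_mon[OF phi]) simp
    have fs: "\<phi> (mon (n + int s) 0) = mon (n + int s) 0" by (rule Aut_m_fix_mon[OF phi]) simp
    have mid: "cb q s i' * (lkp (\<phi> (mon n i')) (a, i) * lkp (\<phi> (mon (n + int i') (s - i'))) (b, j))
       = (if i' = i then (if a = n \<and> b = n + int i \<and> j = s - i then cb q s i else 0) else 0)"
      if "i' \<in> {1..<s}" for i'
    proof -
      have "\<phi> (mon n i') = mon n i'" by (rule Aut_m_fix_mon[OF phi]) (use that in auto)
      moreover have "\<phi> (mon (n + int i') (s - i')) = mon (n + int i') (s - i')"
        by (rule Aut_m_fix_mon[OF phi]) (use that in auto)
      ultimately show ?thesis by (simp add: lookup_mon)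
    qed
    show ?thesis
      apply (subst sum_split_ends)
      using s apply simp
      apply (simp only: sum.cong[OF refl mid])
      apply (simp add: f0 fs lookup_mon e_def)
      done
  qed
  also have "(\<Sum>i'\<in>{1..<s}. if i' = i then (if a = n \<and> b = n + int i \<and> j = s - i then cb q s i else 0) else 0)
     = (if 0 < i \<and> i < s \<and> a = n \<and> b = n + int i \<and> j = s - i then cb q s i else 0)"
    by (subst sum.delta) auto
  finally show ?thesis .
qed


lemma phi_mon_s:
  fixes n :: int and q :: "'k::field"
  assumes phi: "\<phi> \<in> Aut_m q (s - 1)" and s: "s \<ge> 2" and q: "\<forall>n::nat. n > 0 \<longrightarrow> q ^ n \<noteq> 1"
  shows "\<phi> (mon n s) = mon n s + smul (lkp (\<phi> (mon n s)) (n + int s, 0)) (mon (n + int s) 0 - mon n 0)"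
proof (rule poly_mapping_eqI, clarify)
  fix a :: int and c :: nat
  define e where "e = lkp (\<phi> (mon n s))"
  note E = skew_eq[OF phi s, where n=n, folded e_def]
  have e1: "e (a', 1) = 0" for a'
  proof -
    have A: "e (a', 1) = (if a' + 1 = n + int s then e (a', 1) else 0)"
      using E[where b="a' + 1" and a="a'" and i="1" and j="0"] s by (simp add: add.commute)
    have B: "e (a', 1) = (if a' = n then e (a', 1) else 0)"
      using E[where b="a'" and a="a'" and i="0" and j="1"] s by simp
    show ?thesis using A B s by (auto split: if_splits)
  qed
  have e0: "e (a', 0) = (if a' = n then e (a', 0) else 0) + (if a' = n + int s then e (a', 0) else 0)" for a'
    using E[where b="a'" and a="a'" and i="0" and j="0"] by simp
  have e5: "e (n + int s, 0) + e (n, 0) = 0"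
    using E[where b="n + int s" and a="n" and i="0" and j="0"] s by simp
  have e2: "e (a, c) = (if a = n \<and> c = s then 1 else 0)" if "c \<ge> 2"
  proof -
    have "e (a, c) * cb q c 1 = (if a = n \<and> c = s then cb q s 1 else 0)"
      using E[where b="a + 1" and a="a" and i="1" and j="c - 1"] that s by (auto simp: add.commute)
    moreover have "cb q c 1 \<noteq> 0" by (rule cb_1_nz[OF q]) (use that in auto)
    ultimately show ?thesis by (auto split: if_splits)
  qed
  have ns: "n + int s \<noteq> n" using s by simp
  show "lkp (\<phi> (mon n s)) (a, c) =
     lkp (mon n s + smul (lkp (\<phi> (mon n s)) (n + int s, 0)) (mon (n + int s) 0 - mon n 0)) (a, c)"
  proof (cases "c \<ge> 2")
    case True then show ?thesis using s by (simp add: e2[unfolded e_def] lookup_add lookup_minus lookup_mon)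
  next
    case False
    then consider "c = 0" | "c = 1" by linarith
    then show ?thesis
    proof cases
      case 1
      have "e (a, 0) = (if a = n + int s then e (n + int s, 0) else if a = n then - e (n + int s, 0) else 0)"
        using e0[of a] e5 ns by (auto split: if_splits simp: eq_neg_iff_add_eq_0 add.commute)
      then show ?thesis using 1 s ns unfolding e_def by (auto simp: lookup_add lookup_minus lookup_mon)
    next
      case 2 then show ?thesis using s e1[unfolded e_def] by (simp add: lookup_add lookup_minus lookup_mon)
    qed
  qed
qed


definition wv :: "int \<Rightarrow> nat \<Rightarrow> 'k::field hopfH" where
  "wv n s = mon (n + int s) 0 - mon n 0"

lemma lookup_wv: "lkp (wv n s) (a, c) = (if a = n + int s \<and> c = 0 then 1 else 0) - (if a = n \<and> c = 0 then 1 else 0)"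
  by (simp add: wv_def lookup_minus lookup_mon)

lemma wv_Hle: "wv n s \<in> Hle m"
  unfolding Hle_def
proof (clarify)
  fix a c assume "(a, c) \<in> kys (wv n s :: 'k::field hopfH)"
  then have "lkp (wv n s :: 'k::field hopfH) (a, c) \<noteq> 0" by (simp add: in_keys_iff)
  then show "snd (a, c) \<le> m" by (auto simp: lookup_wv split: if_splits)
qed

lemma fs_unique:
  assumes s: "s \<ge> 1" and h: "\<phi> (mon n s) = mon n s + smul \<beta> (wv n s)"
  shows "f_s s \<phi> n = \<beta>"
proof -
  have "(THE \<beta>. \<phi> (mon n s) = mon n s + smul \<beta> (mon (n + int s) 0 - mon n 0)) = \<beta>"
  proof (rule the_equality)
    show "\<phi> (mon n s) = mon n s + smul \<beta> (mon (n + int s) 0 - mon n 0)" using h by (simp add: wv_def)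
  next
    fix \<beta>' assume "\<phi> (mon n s) = mon n s + smul \<beta>' (mon (n + int s) 0 - mon n 0)"
    then have "lkp (mon n s + smul \<beta>' (wv n s)) (n + int s, 0) = lkp (mon n s + smul \<beta> (wv n s)) (n + int s, 0)"
      using h by (simp add: wv_def)
    then show "\<beta>' = \<beta>" using s by (simp add: lookup_add lookup_mon lookup_wv)
  qed
  then show ?thesis by (simp add: f_s_def)
qed

lemma fs_char:
  fixes q :: "'k::field"
  assumes phi: "\<phi> \<in> Aut_m q (s - 1)" and s: "s \<ge> 2" and q: "\<forall>n::nat. n > 0 \<longrightarrow> q ^ n \<noteq> 1"
  shows "\<phi> (mon n s) = mon n s + smul (f_s s \<phi> n) (wv n s)"
proof -
  have h: "\<phi> (mon n s) = mon n s + smul (lkp (\<phi> (mon n s)) (n + int s, 0)) (wv n s)"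
    using phi_mon_s[OF phi s q] by (simp add: wv_def)
  have "f_s s \<phi> n = lkp (\<phi> (mon n s)) (n + int s, 0)" using fs_unique[of s \<phi> n, OF _ h] s by simp
  then show ?thesis using h by simp
qed

lemma smul_add_scalar: "smul a w + smul b w = smul (a + b) w"
  by (rule poly_mapping_eqI) (simp add: lookup_add distrib_right)

lemma fs_comp:
  fixes q :: "'k::field"
  assumes phi: "\<phi> \<in> Aut_m q (s - 1)" and psi: "\<psi> \<in> Aut_m q (s - 1)" and s: "s \<ge> 2"
    and q: "\<forall>n::nat. n > 0 \<longrightarrow> q ^ n \<noteq> 1"
  shows "f_s s (\<phi> \<circ> \<psi>) = (\<lambda>n. f_s s \<phi> n + f_s s \<psi> n)"
proof
  fix n
  have lin: "k_linear \<phi>" by (rule Aut_m_linear[OF phi])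
  have "(\<phi> \<circ> \<psi>) (mon n s) = \<phi> (mon n s + smul (f_s s \<psi> n) (wv n s))"
    by (simp add: fs_char[OF psi s q])
  also have "\<dots> = \<phi> (mon n s) + smul (f_s s \<psi> n) (\<phi> (wv n s))"
    using lin by (simp add: k_linear_def)
  also have "\<phi> (wv n s) = wv n s" by (rule Aut_m_fix[OF phi wv_Hle])
  also have "\<phi> (mon n s) + smul (f_s s \<psi> n) (wv n s) = mon n s + smul (f_s s \<phi> n + f_s s \<psi> n) (wv n s)"
    by (simp add: fs_char[OF phi s q] add.assoc smul_add_scalar)
  finally show "f_s s (\<phi> \<circ> \<psi>) n = f_s s \<phi> n + f_s s \<psi> n"
    by (rule fs_unique[rotated]) (use s in auto)
qed

lemma lext_id: "lext (\<lambda>pr. sgl pr 1) t = t"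
proof (rule poly_mapping_eqI)
  fix k
  have "lkp (lext (\<lambda>pr. sgl pr 1) t) k = (\<Sum>p\<in>kys t. if p = k then lkp t p else 0)"
    by (simp add: lookup_lext lookup_single when_def if_distrib cong: if_cong)
  also have "\<dots> = lkp t k" by (cases "k \<in> kys t") (auto simp: in_keys_iff)
  finally show "lkp (lext (\<lambda>pr. sgl pr 1) t) k = lkp t k" .
qed

lemma linear_fix:
  assumes "k_linear \<phi>" "\<And>p. p \<in> kys h \<Longrightarrow> \<phi> (sgl p 1) = sgl p 1"
  shows "\<phi> h = h"
proof -
  have "\<phi> h = lext (\<lambda>p. \<phi> (sgl p 1)) h" by (subst linear_is_lext[OF assms(1)]) simp
  also have "\<dots> = lext (\<lambda>p. sgl p 1) h" unfolding lext_def by (intro sum.cong refl) (simp add: assms(2))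
  finally show ?thesis by (simp add: lext_id)
qed

lemma Aut_m_mono: "m \<le> m' \<Longrightarrow> Aut_m q m' \<subseteq> Aut_m q m"
  unfolding Aut_m_def Hle_def by (auto intro: order_trans)

lemma kernel_eq:
  fixes q :: "'k::field"
  assumes s: "s \<ge> 2" and q: "\<forall>n::nat. n > 0 \<longrightarrow> q ^ n \<noteq> 1"
  shows "kernel ((AutG q)\<lparr>carrier := Aut_m q (s - 1)\<rparr>) seqG (f_s s) = Aut_m q s"
proof (rule equalityI[OF subsetI subsetI])
  fix \<phi> assume "\<phi> \<in> kernel ((AutG q)\<lparr>carrier := Aut_m q (s - 1)\<rparr>) seqG (f_s s)"
  then have phi: "\<phi> \<in> Aut_m q (s - 1)" and z: "f_s s \<phi> = (\<lambda>n. 0)"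
    by (auto simp: kernel_def seqG_def)
  have "\<phi> h = h" if hs: "h \<in> Hle s" for h
  proof (rule linear_fix[OF Aut_m_linear[OF phi]])
    fix p assume "p \<in> kys h"
    then obtain a c where p: "p = (a, c)" "c \<le> s" using hs by (cases p) (auto simp: Hle_def)
    show "\<phi> (sgl p 1) = sgl p 1"
    proof (cases "c = s")
      case True
      have "\<phi> (mon a s) = mon a s" using fs_char[OF phi s q, of a] z
        by (simp add: smul_eq_iff[THEN iffD2])
      then show ?thesis using True p by (simp add: mon_def)
    next
      case False
      then show ?thesis using Aut_m_fix_mon[OF phi, of c a] p by (simp add: mon_def)
    qed
  qed
  then show "\<phi> \<in> Aut_m q s" using phi by (auto simp: Aut_m_def)
next
  fix \<phi> assume phi: "\<phi> \<in> Aut_m q s"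
  then have phi': "\<phi> \<in> Aut_m q (s - 1)" using Aut_m_mono[of "s - 1" s q] by auto
  have "f_s s \<phi> n = 0" for n
    by (rule fs_unique) (use s Aut_m_fix_mon[OF phi, of s n] in \<open>auto intro!: poly_mapping_eqI simp: lookup_add\<close>)
  then show "\<phi> \<in> kernel ((AutG q)\<lparr>carrier := Aut_m q (s - 1)\<rparr>) seqG (f_s s)"
    using phi' by (auto simp: kernel_def seqG_def)
qed

lemma hom_part:
  fixes q :: "'k::field"
  assumes s: "s \<ge> 2" and q: "\<forall>n::nat. n > 0 \<longrightarrow> q ^ n \<noteq> 1"
  shows "group_hom ((AutG q)\<lparr>carrier := Aut_m q (s - 1)\<rparr>) seqG (f_s s)"
proof (rule group_hom.intro[OF Aut_m_group seqG_group])
  show "group_hom_axioms ((AutG q)\<lparr>carrier := Aut_m q (s - 1)\<rparr>) seqG (f_s s)"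
    by (rule group_hom_axioms.intro, rule homI) (auto simp: seqG_def AutG_def fs_comp[OF _ _ s q])
qed


fun qf :: "'k::field \<Rightarrow> nat \<Rightarrow> 'k" where
  "qf q 0 = 1"
| "qf q (Suc m) = qf q m * cb q (Suc m) 1"

lemma qn_add: assumes "q \<noteq> 1" shows "cb q a 1 + q ^ a * cb q b 1 = cb q (a + b) 1"
proof -
  have "(1 - q) * (cb q a 1 + q ^ a * cb q b 1) = (1 - q) * cb q (a + b) 1"
  proof -
    have "(1 - q) * (cb q a 1 + q ^ a * cb q b 1) = (1 - q) * cb q a 1 + q ^ a * ((1 - q) * cb q b 1)"
      by (simp add: algebra_simps)
    also have "\<dots> = (1 - q ^ a) + q ^ a * (1 - q ^ b)" by (simp only: cb_1)
    also have "\<dots> = 1 - q ^ (a + b)" by (simp add: algebra_simps power_add)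
    also have "\<dots> = (1 - q) * cb q (a + b) 1" by (simp only: cb_1)
    finally show ?thesis .
  qed
  then show ?thesis using assms by simp
qed

lemma qf_nz: assumes "\<forall>n::nat. n > 0 \<longrightarrow> q ^ n \<noteq> 1" shows "qf q m \<noteq> 0"
proof (induction m)
  case (Suc m)
  have "cb q (Suc m) 1 \<noteq> 0" by (rule cb_1_nz[OF assms]) simp
  then show ?case using Suc by (simp only: qf.simps mult_eq_0_iff) simp
qed simp

lemma cb_qf:
  assumes q1: "q \<noteq> 1"
  shows "i \<le> m \<Longrightarrow> cb q m i * qf q i * qf q (m - i) = qf q m"
proof (induction m arbitrary: i)
  case 0 then show ?case by simp
next
  case (Suc m)
  show ?case
  proof (cases "i = 0")
    case True then show ?thesis by simp
  next
    case i0: False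
    show ?thesis
    proof (cases "i = Suc m")
      case True then show ?thesis by (simp add: cb_gt)
    next
      case False
      then have im: "i \<le> m" using Suc.prems by simp
      obtain k where k: "i = Suc k" using i0 by (cases i) auto
      have e1: "cb q m i * qf q i * qf q (Suc m - i) = qf q m * cb q (Suc m - i) 1"
        using Suc.IH[OF im] im by (simp add: Suc_diff_le) (metis mult.commute mult.left_commute)
      have e2: "cb q m k * qf q i * qf q (Suc m - i) = qf q m * cb q i 1"
        using Suc.IH[of k] im k by simp (metis mult.commute mult.left_commute)
      have "cb q (Suc m) i * qf q i * qf q (Suc m - i) =
          cb q m i * qf q i * qf q (Suc m - i) + q ^ (Suc m - i) * (cb q m k * qf q i * qf q (Suc m - i))"
        using k by (simp add: algebra_simps)
      also have "\<dots> = qf q m * (cb q (Suc m - i) 1 + q ^ (Suc m - i) * cb q i 1)"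
        by (simp only: e1 e2) (simp add: algebra_simps)
      also have "\<dots> = qf q m * cb q (Suc m) 1"
        using qn_add[OF q1, of "Suc m - i" i] im by simp
      finally show ?thesis by simp
    qed
  qed
qed

definition Uf :: "nat \<Rightarrow> (int \<Rightarrow> 'k::field) \<Rightarrow> int \<Rightarrow> int \<Rightarrow> 'k" where
  "Uf s \<gamma> x y = (if y = x then 1 else 0) + (if y = x + int s then \<gamma> x else 0)"

lemma Uf_nz: "Uf s \<gamma> x y \<noteq> 0 \<Longrightarrow> y = x \<or> y = x + int s"
  by (auto simp: Uf_def split: if_splits)

lemma sum_int_delta:
  "(\<Sum>i\<le>m. if n + int i = x then f i else 0) = (if n \<le> x \<and> x \<le> n + int m then f (nat (x - n)) else 0)"
proof -
  have "(\<Sum>i\<le>m. if n + int i = x then f i else 0) = (\<Sum>i\<le>m. if i = nat (x - n) \<and> n \<le> x then f i else 0)"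
    by (intro sum.cong refl) auto
  also have "\<dots> = (if n \<le> x \<and> x \<le> n + int m then f (nat (x - n)) else 0)"
    by (cases "n \<le> x") (auto simp: sum.delta)
  finally show ?thesis .
qed

definition nil :: "nat \<Rightarrow> (int \<Rightarrow> 'k::field) \<Rightarrow> bool" where
  "nil s \<gamma> \<longleftrightarrow> (\<forall>a. \<gamma> a * \<gamma> (a + int s) = 0)"

lemma KEY:
  assumes nil: "nil s \<gamma>" and s: "s \<ge> 1" and x: "n \<le> x" and r: "x + int s \<le> n + int m \<or> y \<le> n + int m"
  shows "(\<Sum>i\<le>m. Uf s (\<lambda>z. - \<gamma> z) x (n + int i) * Uf s \<gamma> (n + int i) y) = (if x = y then 1 else 0)"
proof -
  have "(\<Sum>i\<le>m. Uf s (\<lambda>z. - \<gamma> z) x (n + int i) * Uf s \<gamma> (n + int i) y)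
     = (\<Sum>i\<le>m. if n + int i = x then Uf s \<gamma> x y else 0) - \<gamma> x * (\<Sum>i\<le>m. if n + int i = x + int s then Uf s \<gamma> (x + int s) y else 0)"
  proof -
    have pt: "Uf s (\<lambda>z. - \<gamma> z) x c * Uf s \<gamma> c y =
       (if c = x then Uf s \<gamma> x y else 0) - \<gamma> x * (if c = x + int s then Uf s \<gamma> (x + int s) y else 0)" for c
      using s by (auto simp: Uf_def algebra_simps)
    show ?thesis unfolding pt sum_subtractf sum_distrib_left
      by (intro arg_cong2[where f="(-)"] sum.cong refl)
  qed
  also have "\<dots> = Uf s \<gamma> x y - \<gamma> x * Uf s \<gamma> (x + int s) y"
    unfolding sum_int_delta using x r s
    by (auto simp: Uf_def)
  also have "\<dots> = (if x = y then 1 else 0)"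
    using nil s unfolding nil_def Uf_def by (auto simp: algebra_simps)
  finally show ?thesis .
qed


definition Mc :: "'k::field \<Rightarrow> nat \<Rightarrow> (int \<Rightarrow> 'k) \<Rightarrow> int \<times> nat \<Rightarrow> int \<times> nat \<Rightarrow> 'k" where
  "Mc q s \<gamma> p r = qf q (snd p) / qf q (snd r) * Uf s \<gamma> (fst p) (fst r)
       * Uf s (\<lambda>z. - \<gamma> z) (fst r + int (snd r)) (fst p + int (snd p))"

lemma Mc_nz: "Mc q s \<gamma> (n, m) (a, l) \<noteq> 0 \<Longrightarrow> (a = n \<or> a = n + int s) \<and> l \<le> m \<and> n \<le> a"
  unfolding Mc_def by (auto dest!: Uf_nz)

lemma Mc_fin: "finite {r. Mc q s \<gamma> p r \<noteq> 0}"
proof -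
  obtain n m where p: "p = (n, m)" by (cases p)
  have "{r. Mc q s \<gamma> p r \<noteq> 0} \<subseteq> {n, n + int s} \<times> {..m}"
    using Mc_nz p by fastforce
  then show ?thesis by (rule finite_subset) auto
qed

definition Bm :: "'k::field \<Rightarrow> nat \<Rightarrow> (int \<Rightarrow> 'k) \<Rightarrow> int \<times> nat \<Rightarrow> 'k hopfH" where
  "Bm q s \<gamma> p = Abs_poly_mapping (Mc q s \<gamma> p)"

lemma lookup_Bm: "lkp (Bm q s \<gamma> p) = Mc q s \<gamma> p"
  unfolding Bm_def by (rule lookup_Abs_poly_mapping[OF Mc_fin])

lemma keys_Bm: "kys (Bm q s \<gamma> (n, m)) \<subseteq> {n, n + int s} \<times> {..m}"
  using Mc_nz by (fastforce simp: in_keys_iff lookup_Bm)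

definition Phi :: "'k::field \<Rightarrow> nat \<Rightarrow> (int \<Rightarrow> 'k) \<Rightarrow> 'k hopfH \<Rightarrow> 'k hopfH" where
  "Phi q s \<gamma> = lext (Bm q s \<gamma>)"

lemma Phi_mon: "Phi q s \<gamma> (mon n m) = Bm q s \<gamma> (n, m)"
proof -
  have "smul 1 x = x" for x :: "'k::field hopfH" by (rule poly_mapping_eqI) simp
  then show ?thesis by (simp add: Phi_def mon_single lext_single)
qed

lemma lookup_Phi_mon: "lkp (Phi q s \<gamma> (mon n m)) r = Mc q s \<gamma> (n, m) r"
  by (simp add: Phi_mon lookup_Bm)

lemma Phi_linear: "k_linear (Phi q s \<gamma>)"
  by (simp add: Phi_def k_linear_lext)


lemma Phi_low:
  assumes s: "m < s" and q: "\<forall>n::nat. n > 0 \<longrightarrow> q ^ n \<noteq> 1"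
  shows "Phi q s \<gamma> (mon n m) = mon n m"
proof (rule poly_mapping_eqI, clarify)
  fix a l
  have "Mc q s \<gamma> (n, m) (a, l) = (if a = n \<and> l = m then 1 else 0)"
    using s qf_nz[OF q, of m] by (auto simp: Mc_def Uf_def)
  then show "lkp (Phi q s \<gamma> (mon n m)) (a, l) = lkp (mon n m) (a, l)"
    by (simp add: lookup_Phi_mon lookup_mon)
qed

lemma Phi_fix:
  assumes q: "\<forall>n::nat. n > 0 \<longrightarrow> q ^ n \<noteq> 1" and s: "s \<ge> 1" and h: "h \<in> Hle (s - 1)"
  shows "Phi q s \<gamma> h = h"
proof (rule linear_fix[OF Phi_linear])
  fix p assume "p \<in> kys h"
  then obtain a c where p: "p = (a, c)" "c < s" using h s by (cases p) (auto simp: Hle_def)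
  then show "Phi q s \<gamma> (sgl p 1) = sgl p 1" using Phi_low[OF _ q, of c s \<gamma> a] by (simp add: mon_def)
qed

lemma Phi_s:
  assumes q: "\<forall>n::nat. n > 0 \<longrightarrow> q ^ n \<noteq> 1" and s: "s \<ge> 1"
  shows "Phi q s \<gamma> (mon n s) = mon n s + smul (qf q s * \<gamma> n) (wv n s)"
proof (rule poly_mapping_eqI, clarify)
  fix a l
  have "Mc q s \<gamma> (n, s) (a, l) = lkp (mon n s + smul (qf q s * \<gamma> n) (wv n s)) (a, l)"
    using s qf_nz[OF q, of s] qf_nz[OF q, of l]
    by (auto simp: Mc_def Uf_def lookup_add lookup_mon lookup_wv)
  then show "lkp (Phi q s \<gamma> (mon n s)) (a, l) = lkp (mon n s + smul (qf q s * \<gamma> n) (wv n s)) (a, l)"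
    by (simp add: lookup_Phi_mon)
qed


lemma div_cancel_aux: "(c::'k::field) \<noteq> 0 \<Longrightarrow> x / (c * y) * c = x / y"
  by (cases "y = 0") (simp_all add: field_simps)

lemma Phi_coalg_mon:
  assumes nil: "nil s \<gamma>" and s: "s \<ge> 1" and q: "\<forall>n::nat. n > 0 \<longrightarrow> q ^ n \<noteq> 1"
  shows "comul q (Phi q s \<gamma> (mon n m)) = tensor_map (Phi q s \<gamma>) (Phi q s \<gamma>) (comul q (mon n m))"
proof (rule poly_mapping_eqI, clarify)
  fix a i b j
  let ?U = "Uf s \<gamma>" and ?V = "Uf s (\<lambda>z. - \<gamma> z)"
  have q1: "q \<noteq> 1" using q by (metis one_neq_zero power_one_right zero_less_one)
  have nzi: "qf q i \<noteq> 0" and nzj: "qf q j \<noteq> 0" using qf_nz[OF q] by auto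
  let ?C = "qf q m / (qf q i * qf q j) * ?U n a * ?V (b + int j) (n + int m)"
  have RHS: "lkp (tensor_map (Phi q s \<gamma>) (Phi q s \<gamma>) (comul q (mon n m))) ((a, i), (b, j))
      = (\<Sum>i'\<le>m. ?C * (?V (a + int i) (n + int i') * ?U (n + int i') b))"
  proof -
    have "lkp (tensor_map (Phi q s \<gamma>) (Phi q s \<gamma>) (comul q (mon n m))) ((a, i), (b, j))
      = (\<Sum>i'\<le>m. cb q m i' * (Mc q s \<gamma> (n, i') (a, i) * Mc q s \<gamma> (n + int i', m - i') (b, j)))"
      by (simp add: lookup_tm_comul_mon lookup_Phi_mon)
    also have "\<dots> = (\<Sum>i'\<le>m. ?C * (?V (a + int i) (n + int i') * ?U (n + int i') b))"
    proof (rule sum.cong[OF refl])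
      fix i' assume "i' \<in> {..m}"
      then have im: "i' \<le> m" by simp
      have e: "n + int i' + int (m - i') = n + int m" using im by simp
      have c: "cb q m i' * qf q i' * qf q (m - i') = qf q m" by (rule cb_qf[OF q1 im])
      show "cb q m i' * (Mc q s \<gamma> (n, i') (a, i) * Mc q s \<gamma> (n + int i', m - i') (b, j)) =
          ?C * (?V (a + int i) (n + int i') * ?U (n + int i') b)"
        unfolding Mc_def fst_conv snd_conv e
        using c nzi nzj by (simp add: field_simps)
    qed
    finally show ?thesis .
  qed
  have LHS: "lkp (comul q (Phi q s \<gamma> (mon n m))) ((a, i), (b, j)) =
     (if b = a + int i then qf q m / (qf q i * qf q j) * ?U n a * ?V (a + int i + int j) (n + int m) else 0)"
  proof -
    have c: "cb q (i + j) i * (qf q i * qf q j) = qf q (i + j)" using cb_qf[OF q1, of i "i + j"] by (simp add: mult.assoc)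
    have cbnz: "cb q (i + j) i \<noteq> 0" using c qf_nz[OF q, of "i + j"] by auto
    have k: "qf q m / qf q (i + j) * cb q (i + j) i = qf q m / (qf q i * qf q j)"
      unfolding c[symmetric] by (rule div_cancel_aux[OF cbnz])
    have "lkp (comul q (Phi q s \<gamma> (mon n m))) ((a, i), (b, j)) =
      (if b = a + int i then (qf q m / qf q (i + j) * cb q (i + j) i) * ?U n a * ?V (a + int i + int j) (n + int m) else 0)"
      by (simp add: lookup_comul lookup_Phi_mon Mc_def add.assoc mult.commute mult.left_commute)
    then show ?thesis by (simp only: k)
  qed
  show "lkp (comul q (Phi q s \<gamma> (mon n m))) ((a, i), (b, j)) =
        lkp (tensor_map (Phi q s \<gamma>) (Phi q s \<gamma>) (comul q (mon n m))) ((a, i), (b, j))"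
  proof (cases "?U n a = 0 \<or> ?V (b + int j) (n + int m) = 0")
    case True
    then show ?thesis unfolding LHS RHS by auto
  next
    case False
    then have an: "n \<le> a" and bj: "b + int j \<le> n + int m"
      using Uf_nz[of s \<gamma> n a] Uf_nz[of s "\<lambda>z. - \<gamma> z" "b + int j" "n + int m"] by auto
    have "(\<Sum>i'\<le>m. ?C * (?V (a + int i) (n + int i') * ?U (n + int i') b)) = ?C * (if a + int i = b then 1 else 0)"
      unfolding sum_distrib_left[symmetric]
      by (subst KEY[OF nil s]) (use an bj in auto)
    then show ?thesis unfolding LHS RHS by auto
  qed
qed


lemma comul_linear: "k_linear (comul q)"
  by (simp add: comul_lext k_linear_lext)

lemma Phi_coalg:
  assumes nil: "nil s \<gamma>" and s: "s \<ge> 1" and q: "\<forall>n::nat. n > 0 \<longrightarrow> q ^ n \<noteq> 1"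
  shows "comul q (Phi q s \<gamma> v) = tensor_map (Phi q s \<gamma>) (Phi q s \<gamma>) (comul q v)"
proof -
  have lt: "k_linear (tensor_map (Phi q s \<gamma>) (Phi q s \<gamma>))" by (simp add: tensor_map_lext k_linear_lext)
  have "comul q (Phi q s \<gamma> v) = lext (comul q \<circ> Bm q s \<gamma>) v"
    unfolding Phi_def by (rule linear_lext_comp[OF comul_linear])
  also have "\<dots> = lext (tensor_map (Phi q s \<gamma>) (Phi q s \<gamma>) \<circ> comul_basis q) v"
  proof -
    have "(comul q \<circ> Bm q s \<gamma>) p = (tensor_map (Phi q s \<gamma>) (Phi q s \<gamma>) \<circ> comul_basis q) p" for p
    proof -
      obtain n m where p: "p = (n, m)" by (cases p)
      show ?thesis using Phi_coalg_mon[OF nil s q, of n m]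
        by (simp add: p Phi_mon comul_mon comul_basis_formula)
    qed
    then have "comul q \<circ> Bm q s \<gamma> = tensor_map (Phi q s \<gamma>) (Phi q s \<gamma>) \<circ> comul_basis q" by (rule ext)
    then show ?thesis by simp
  qed
  also have "\<dots> = tensor_map (Phi q s \<gamma>) (Phi q s \<gamma>) (comul q v)"
    unfolding comul_lext by (rule linear_lext_comp[OF lt, symmetric])
  finally show ?thesis .
qed

lemma counit_ext: "finite A \<Longrightarrow> kys w \<subseteq> A \<Longrightarrow> counit w = (\<Sum>p\<in>A. lkp w p * (if snd p = 0 then 1 else 0))"
  unfolding counit_def by (subst sum_keys_ext[symmetric]) (auto intro!: sum.cong)

lemma counit_add: "counit (u + w) = counit u + counit w"
proof -
  let ?A = "kys u \<union> kys w"
  have "kys (u + w) \<subseteq> ?A" by (rule keys_add)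
  then show ?thesis
    by (subst (1 2 3) counit_ext[of ?A]) (auto simp: lookup_add distrib_right sum.distrib)
qed

lemma counit_smul: "counit (smul c v) = c * counit v"
proof -
  have k: "kys (smul c v) \<subseteq> kys v" by (auto simp: in_keys_iff)
  show ?thesis
    using counit_ext[OF finite_keys k] counit_ext[OF finite_keys subset_refl, of v]
    by (simp add: sum_distrib_left mult.assoc)
qed

lemma counit_linear_sum: "counit (sum f A) = (\<Sum>a\<in>A. counit (f a))"
proof -
  have z: "counit 0 = 0" by (simp add: counit_def)
  show ?thesis by (induction A rule: infinite_finite_induct) (simp_all add: counit_add z)
qed

lemma counit_lext: "counit (lext B v) = (\<Sum>p\<in>kys v. lkp v p * counit (B p))"
  unfolding lext_def counit_linear_sum counit_smul ..

lemma nil_neg: "nil s \<gamma> \<Longrightarrow> nil s (\<lambda>z. - \<gamma> z)"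
  by (simp add: nil_def)

lemma KEY':
  assumes nil: "nil s \<gamma>" and s: "s \<ge> 1" and x: "n \<le> x" and r: "x + int s \<le> n + int m \<or> y \<le> n + int m"
  shows "(\<Sum>i\<le>m. Uf s \<gamma> x (n + int i) * Uf s (\<lambda>z. - \<gamma> z) (n + int i) y) = (if x = y then 1 else 0)"
  using KEY[OF nil_neg[OF nil] s x r] by simp

lemma counit_mon: "counit (mon n m) = (if m = 0 then 1 else 0)"
  by (simp add: counit_def mon_def)

lemma Phi_counit_mon:
  assumes nil: "nil s \<gamma>" and s: "s \<ge> 1" and q: "\<forall>n::nat. n > 0 \<longrightarrow> q ^ n \<noteq> 1"
  shows "counit (Phi q s \<gamma> (mon n m)) = counit (mon n m)"
proof -
  let ?w = "Bm q s \<gamma> (n, m)"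
  let ?I = "(\<lambda>i. (n + int i, 0::nat)) ` {..m}"
  have "counit ?w = (\<Sum>p\<in>kys ?w \<union> ?I. lkp ?w p * (if snd p = 0 then 1 else 0))"
    by (rule counit_ext) auto
  also have "\<dots> = (\<Sum>p\<in>?I. lkp ?w p * (if snd p = 0 then 1 else 0))"
  proof (rule sum.mono_neutral_right)
    show "\<forall>p\<in>kys ?w \<union> ?I - ?I. lkp ?w p * (if snd p = 0 then 1 else 0) = 0"
    proof
      fix p assume p: "p \<in> kys ?w \<union> ?I - ?I"
      obtain a l where al: "p = (a, l)" by (cases p)
      show "lkp ?w p * (if snd p = 0 then 1 else 0) = 0"
      proof (cases "l = 0 \<and> Mc q s \<gamma> (n, m) (a, l) \<noteq> 0")
        case True
        then have "n \<le> a" "a \<le> n + int m" using Mc_nz[of q s \<gamma> n m a l]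
          by (auto simp: Mc_def dest!: Uf_nz)
        then have "p \<in> ?I" using True al by (auto intro!: image_eqI[where x="nat (a - n)"])
        then show ?thesis using p by simp
      qed (auto simp: al lookup_Bm)
    qed
  qed auto
  also have "\<dots> = (\<Sum>i\<le>m. Mc q s \<gamma> (n, m) (n + int i, 0))"
    by (subst sum.reindex) (auto simp: inj_on_def lookup_Bm)
  also have "\<dots> = qf q m * (\<Sum>i\<le>m. Uf s \<gamma> n (n + int i) * Uf s (\<lambda>z. - \<gamma> z) (n + int i) (n + int m))"
    by (simp add: Mc_def sum_distrib_left mult.assoc)
  also have "\<dots> = (if m = 0 then 1 else 0)"
    by (subst KEY'[OF nil s]) auto
  finally show ?thesis
    unfolding Phi_mon counit_mon .
qed

lemma Phi_counit:
  assumes nil: "nil s \<gamma>" and s: "s \<ge> 1" and q: "\<forall>n::nat. n > 0 \<longrightarrow> q ^ n \<noteq> 1"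
  shows "counit (Phi q s \<gamma> v) = counit v"
proof -
  have "counit (Phi q s \<gamma> v) = (\<Sum>p\<in>kys v. lkp v p * counit (Bm q s \<gamma> p))"
    by (simp add: Phi_def counit_lext)
  also have "\<dots> = (\<Sum>p\<in>kys v. lkp v p * counit (sgl p 1))"
  proof (rule sum.cong[OF refl])
    fix p :: "int \<times> nat" obtain n m where p: "p = (n, m)" by (cases p)
    show "lkp v p * counit (Bm q s \<gamma> p) = lkp v p * counit (sgl p 1)"
      using Phi_counit_mon[OF nil s q, of n m] unfolding Phi_mon by (simp add: p mon_def)
  qed
  also have "\<dots> = counit (lext (\<lambda>p. sgl p 1) v)" by (simp add: counit_lext)
  finally show ?thesis by (simp add: lext_id)
qed


lemma Phi_inv_mon:
  assumes nil: "nil s \<gamma>" and s: "s \<ge> 1" and q: "\<forall>n::nat. n > 0 \<longrightarrow> q ^ n \<noteq> 1"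
  shows "Phi q s \<gamma> (Phi q s (\<lambda>z. - \<gamma> z) (mon n m)) = mon n m"
proof (rule poly_mapping_eqI, clarify)
  fix a l
  let ?U = "Uf s \<gamma>" and ?V = "Uf s (\<lambda>z. - \<gamma> z)"
  let ?w = "Bm q s (\<lambda>z. - \<gamma> z) (n, m)"
  let ?g = "\<lambda>(i, l'). (n + int i, l')"
  let ?S = "?g ` ({..s} \<times> {..m})"
  have sub: "kys ?w \<subseteq> ?S"
  proof
    fix p assume "p \<in> kys ?w"
    then obtain a' l' where p: "p = (a', l')" "a' = n \<or> a' = n + int s" "l' \<le> m"
      using keys_Bm[of q s "\<lambda>z. - \<gamma> z" n m] by blast
    show "p \<in> ?S"
    proof (cases "a' = n")
      case True then show ?thesis using p by (auto intro!: image_eqI[where x="(0, l')"])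
    next
      case False then show ?thesis using p by (auto intro!: image_eqI[where x="(s, l')"])
    qed
  qed
  have nzl: "qf q l \<noteq> 0" using qf_nz[OF q] by auto
  have "lkp (Phi q s \<gamma> (Phi q s (\<lambda>z. - \<gamma> z) (mon n m))) (a, l)
     = (\<Sum>p\<in>?S. lkp ?w p * Mc q s \<gamma> p (a, l))"
    unfolding Phi_mon unfolding Phi_def by (simp add: lookup_lext_ext[OF _ sub] lookup_Bm)
  also have "\<dots> = (\<Sum>i\<le>s. \<Sum>l'\<le>m. Mc q s (\<lambda>z. - \<gamma> z) (n, m) (n + int i, l') * Mc q s \<gamma> (n + int i, l') (a, l))"
    by (subst sum.reindex) (auto simp: inj_on_def lookup_Bm sum.cartesian_product' intro!: sum.cong)
  also have "\<dots> = (\<Sum>i\<le>s. qf q m / qf q l * (?V n (n + int i) * ?U (n + int i) a) *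
       (\<Sum>l'\<le>m. ?V (a + int l) (n + int i + int l') * ?U (n + int i + int l') (n + int m)))"
  proof (intro sum.cong refl)
    fix i assume "i \<in> {..s}"
    have "Mc q s (\<lambda>z. - \<gamma> z) (n, m) (n + int i, l') * Mc q s \<gamma> (n + int i, l') (a, l) =
      qf q m / qf q l * (?V n (n + int i) * ?U (n + int i) a) *
       (?V (a + int l) (n + int i + int l') * ?U (n + int i + int l') (n + int m))" for l'
    proof -
      have "qf q l' \<noteq> 0" using qf_nz[OF q] by auto
      then show ?thesis by (simp add: Mc_def field_simps)
    qed
    then show "(\<Sum>l'\<le>m. Mc q s (\<lambda>z. - \<gamma> z) (n, m) (n + int i, l') * Mc q s \<gamma> (n + int i, l') (a, l)) =
      qf q m / qf q l * (?V n (n + int i) * ?U (n + int i) a) *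
       (\<Sum>l'\<le>m. ?V (a + int l) (n + int i + int l') * ?U (n + int i + int l') (n + int m))"
      by (simp add: sum_distrib_left)
  qed
  also have "\<dots> = (\<Sum>i\<le>s. qf q m / qf q l * (?V n (n + int i) * ?U (n + int i) a) *
       (if a + int l = n + int m then 1 else 0))"
  proof (intro sum.cong refl)
    fix i assume "i \<in> {..s}"
    show "qf q m / qf q l * (?V n (n + int i) * ?U (n + int i) a) *
       (\<Sum>l'\<le>m. ?V (a + int l) (n + int i + int l') * ?U (n + int i + int l') (n + int m)) =
       qf q m / qf q l * (?V n (n + int i) * ?U (n + int i) a) * (if a + int l = n + int m then 1 else 0)"
    proof (cases "?U (n + int i) a = 0")
      case False
      then have "n + int i \<le> a" using Uf_nz[of s \<gamma> "n + int i" a] by auto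
      then show ?thesis by (subst KEY[OF nil s]) auto
    qed simp
  qed
  also have "\<dots> = qf q m / qf q l * (if a + int l = n + int m then 1 else 0) *
      (\<Sum>i\<le>s. ?V n (n + int i) * ?U (n + int i) a)"
    by (simp add: sum_distrib_left mult.commute mult.left_commute)
  also have "\<dots> = lkp (mon n m) (a, l)"
    by (subst KEY[OF nil s]) (auto simp: lookup_mon nzl qf_nz[OF q])
  finally show "lkp (Phi q s \<gamma> (Phi q s (\<lambda>z. - \<gamma> z) (mon n m))) (a, l) = lkp (mon n m) (a, l)" .
qed


lemma Phi_Aut:
  assumes nil: "nil s \<gamma>" and s: "s \<ge> 1" and q: "\<forall>n::nat. n > 0 \<longrightarrow> q ^ n \<noteq> 1"
  shows "Phi q s \<gamma> \<in> Aut_m q (s - 1)"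
proof -
  have inv1: "Phi q s \<gamma> \<circ> Phi q s (\<lambda>z. - \<gamma> z) = id"
  proof
    fix h show "(Phi q s \<gamma> \<circ> Phi q s (\<lambda>z. - \<gamma> z)) h = id h"
      using linear_fix[OF linear_comp[OF Phi_linear[of q s \<gamma>] Phi_linear[of q s "\<lambda>z. - \<gamma> z"]], where h=h]
        Phi_inv_mon[OF nil s q, unfolded mon_def] by (metis comp_apply id_apply prod.collapse)
  qed
  have inv2: "Phi q s (\<lambda>z. - \<gamma> z) \<circ> Phi q s \<gamma> = id"
  proof
    fix h show "(Phi q s (\<lambda>z. - \<gamma> z) \<circ> Phi q s \<gamma>) h = id h"
      using linear_fix[OF linear_comp[OF Phi_linear[of q s "\<lambda>z. - \<gamma> z"] Phi_linear[of q s \<gamma>]], where h=h]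
        Phi_inv_mon[OF nil_neg[OF nil] s q, unfolded mon_def minus_minus] by (metis comp_apply id_apply prod.collapse)
  qed
  have "bij (Phi q s \<gamma>)" by (rule o_bij[OF inv2 inv1])
  then show ?thesis
    using Phi_linear Phi_coalg[OF nil s q] Phi_counit[OF nil s q] Phi_fix[OF q s]
    by (auto simp: Aut_m_def Aut_c_def)
qed

lemma fs_Phi:
  assumes nil: "nil s \<gamma>" and s: "s \<ge> 1" and q: "\<forall>n::nat. n > 0 \<longrightarrow> q ^ n \<noteq> 1"
  shows "f_s s (Phi q s \<gamma>) n = qf q s * \<gamma> n"
  using fs_unique[of s "Phi q s \<gamma>" n "qf q s * \<gamma> n"] s Phi_s[OF q s, of \<gamma> n] by simp

lemma surj_part:
  fixes q :: "'k::field"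
  assumes s: "s \<ge> 2" and q: "\<forall>n::nat. n > 0 \<longrightarrow> q ^ n \<noteq> 1"
  shows "f_s s ` Aut_m q (s - 1) = carrier seqG"
proof -
  have s1: "s \<ge> 1" using s by simp
  have "\<beta> \<in> f_s s ` Aut_m q (s - 1)" for \<beta> :: "int \<Rightarrow> 'k"
  proof -
    define ge where "ge a = (if even (a div int s) then \<beta> a / qf q s else 0)" for a
    define go where "go a = (if odd (a div int s) then \<beta> a / qf q s else 0)" for a
    have d: "(a + int s) div int s = a div int s + 1" for a using s by simp
    have ne: "nil s ge" "nil s go" unfolding nil_def ge_def go_def by (auto simp: d)
    have A: "Phi q s ge \<in> Aut_m q (s - 1)" "Phi q s go \<in> Aut_m q (s - 1)"
      using Phi_Aut[OF _ s1 q] ne by auto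
    have "f_s s (Phi q s ge \<circ> Phi q s go) = \<beta>"
    proof
      fix n
      have "f_s s (Phi q s ge \<circ> Phi q s go) n = qf q s * ge n + qf q s * go n"
        using fs_comp[OF A s q] fs_Phi[OF ne(1) s1 q] fs_Phi[OF ne(2) s1 q] by simp
      also have "\<dots> = \<beta> n" using qf_nz[OF q, of s] by (simp add: ge_def go_def)
      finally show "f_s s (Phi q s ge \<circ> Phi q s go) n = \<beta> n" .
    qed
    moreover have "Phi q s ge \<circ> Phi q s go \<in> Aut_m q (s - 1)" using Aut_m_comp A by blast
    ultimately show ?thesis by (metis image_eqI)
  qed
  then show ?thesis by (auto simp: seqG_def)
qed

theorem proposition3p7:
  fixes q :: "'k::field" and s :: nat
  assumes "q \<noteq> 0"
    and "\<forall>n::nat. n > 0 \<longrightarrow> q ^ n \<noteq> 1"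
    and "s \<ge> 2"
  shows "group_hom ((AutG q)\<lparr>carrier := Aut_m q (s - 1)\<rparr>) seqG (f_s s)
       \<and> f_s s ` Aut_m q (s - 1) = carrier seqG
       \<and> subgroup (Aut_m q s) ((AutG q)\<lparr>carrier := Aut_m q (s - 1)\<rparr>)
       \<and> kernel ((AutG q)\<lparr>carrier := Aut_m q (s - 1)\<rparr>) seqG (f_s s) = Aut_m q s"
proof -
  have h: "group_hom ((AutG q)\<lparr>carrier := Aut_m q (s - 1)\<rparr>) seqG (f_s s)"
    by (rule hom_part[OF assms(3,2)])
  have k: "kernel ((AutG q)\<lparr>carrier := Aut_m q (s - 1)\<rparr>) seqG (f_s s) = Aut_m q s"
    by (rule kernel_eq[OF assms(3,2)])
  show ?thesis
    using h k surj_part[OF assms(3,2)] group_hom.subgroup_kernel[OF h] by simp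
qed

end
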